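(* Let $k\in\mathbb N$ and $n\in\mathbb Z^+$, with $a_j$, $\Phi_m,\Psi_m$, $\Phi_n^{(k)},\Psi_n^{(k)}$ as in the context. Then $$2z^k\prod_{j=0}^{k-1}(1-|a_j|^2)\begin{pmatrix}\Phi_n^{(k)}&\Psi_n^{(k)}\\ \Phi_n^{(k)*}&-\Psi_n^{(k)*}\end{pmatrix}=\begin{pmatrix}\Phi_{n+k}&\Psi_{n+k}\\ \Phi_{n+k}^*&-\Psi_{n+k}^*\end{pmatrix}\begin{pmatrix}\Psi_k^*+\Psi_k&\Psi_k^*-\Psi_k\\ \Phi_k^*-\Phi_k&\Phi_k^*+\Phi_k\end{pmatrix}.$$
   Context: $\mathbb N=\{1,2,\dots\}$, $\mathbb Z^+=\mathbb N\cup\{0\}$. For a polynomial $p$ indexed by $m$, $p^*(z)=z^m\overline{p(1/\bar z)}$ (reversal with respect to degree $m$; e.g. $\Phi_n^{(k)*}$ is taken with respect to degree $n$). Let $\sigma$ be a positive Borel measure on $[0,2\pi)$ with infinite support; $\Phi_m$ the monic degree-$m$ polynomials orthogonal with respect to $\sigma$ on the unit circle; $a_m=-\overline{\Phi_{m+1}(0)}$, so $|a_m|<1$, $\Phi_0=1$, $\Phi_{m+1}=z\Phi_m-\overline{a_m}\Phi_m^*$; $\Psi_0=1$, $\Psi_{m+1}=z\Psi_m+\overline{a_m}\Psi_m^*$. The $k$th associated polynomials: $\Phi_0^{(k)}=\Psi_0^{(k)}=1$, $\Phi_{m+1}^{(k)}=z\Phi_m^{(k)}-\overline{a_{m+k}}\,\Phi_m^{(k)*}$,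 $\Psi_{m+1}^{(k)}=z\Psi_m^{(k)}+\overline{a_{m+k}}\,\Psi_m^{(k)*}$. *)

theory Defs
  imports "HOL-Computational_Algebra.Polynomial" Complex_Main
begin

text \<open>Reversal with respect to degree m: p* (z) = z^m conj(p(1/conj z)),
  i.e. the coefficient of z^i in p* is conj(coeff p (m - i)) for i \<le> m.\<close>
definition rev_star :: "nat \<Rightarrow> complex poly \<Rightarrow> complex poly" where
  "rev_star m p = (\<Sum>i\<le>m. monom (cnj (coeff p (m - i))) i)"

fun Phi :: "(nat \<Rightarrow> complex) \<Rightarrow> nat \<Rightarrow> complex poly" where
  "Phi a 0 = 1"
| "Phi a (Suc m) = [:0, 1:] * Phi a m - smult (cnj (a m)) (rev_star m (Phi a m))"

fun Psi :: "(nat \<Rightarrow> complex) \<Rightarrow> nat \<Rightarrow> complex poly" where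
  "Psi a 0 = 1"
| "Psi a (Suc m) = [:0, 1:] * Psi a m + smult (cnj (a m)) (rev_star m (Psi a m))"

definition Phi_assoc :: "(nat \<Rightarrow> complex) \<Rightarrow> nat \<Rightarrow> nat \<Rightarrow> complex poly" where
  "Phi_assoc a k m = Phi (\<lambda>j. a (j + k)) m"

definition Psi_assoc :: "(nat \<Rightarrow> complex) \<Rightarrow> nat \<Rightarrow> nat \<Rightarrow> complex poly" where
  "Psi_assoc a k m = Psi (\<lambda>j. a (j + k)) m"

end

theory Submission
  imports Defs
begin

lemma coeff_rev_star:
  "coeff (rev_star m p) i = (if i \<le> m then cnj (coeff p (m - i)) else 0)"
  unfolding rev_star_def by (simp add: coeff_sum coeff_monom)

lemma degree_rev_star: "degree (rev_star m p) \<le> m"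
  by (rule degree_le) (simp add: coeff_rev_star)

lemma rev_star_add: "rev_star m (p + q) = rev_star m p + rev_star m q"
  by (rule poly_eqI) (simp add: coeff_rev_star)

lemma rev_star_diff: "rev_star m (p - q) = rev_star m p - rev_star m q"
  by (rule poly_eqI) (simp add: coeff_rev_star)

lemma rev_star_smult: "rev_star m (smult c p) = smult (cnj c) (rev_star m p)"
  by (rule poly_eqI) (simp add: coeff_rev_star)

lemma rev_star_one: "rev_star 0 1 = 1"
  by (rule poly_eqI) (simp add: coeff_rev_star coeff_1)

lemma rev_star_z: "rev_star (Suc m) ([:0, 1:] * p) = rev_star m p"
proof (rule poly_eqI)
  fix i
  have e: "[:0, 1:] * p = pCons 0 p" by simp
  show "coeff (rev_star (Suc m) ([:0, 1:] * p)) i = coeff (rev_star m p) i"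
    unfolding e by (cases "i \<le> m") (auto simp: coeff_rev_star coeff_pCons Suc_diff_le split: nat.split)
qed

lemma rev_star_deg: "degree p \<le> m \<Longrightarrow> rev_star (Suc m) p = [:0, 1:] * rev_star m p"
proof (rule poly_eqI)
  fix i assume d: "degree p \<le> m"
  have e: "[:0, 1:] * rev_star m p = pCons 0 (rev_star m p)" by simp
  show "coeff (rev_star (Suc m) p) i = coeff ([:0, 1:] * rev_star m p) i"
    unfolding e using d
    by (cases i) (auto simp: coeff_rev_star coeff_eq_0)
qed

lemma rev_star_rev_star: "degree p \<le> m \<Longrightarrow> rev_star m (rev_star m p) = p"
  by (rule poly_eqI) (auto simp: coeff_rev_star coeff_eq_0)

lemma degree_Phi: "degree (Phi a m) \<le> m"
proof (induction m)
  case 0 then show ?case by simp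
next
  case (Suc m)
  have "degree ([:0, 1:] * Phi a m) \<le> Suc m"
    using Suc by (simp add: degree_pCons_eq_if)
  moreover have "degree (smult (cnj (a m)) (rev_star m (Phi a m))) \<le> Suc m"
    using degree_rev_star[of m] by (meson degree_smult_le le_SucI order_trans)
  ultimately show ?case by (simp add: degree_diff_le)
qed

lemma degree_Psi: "degree (Psi a m) \<le> m"
proof (induction m)
  case 0 then show ?case by simp
next
  case (Suc m)
  have "degree ([:0, 1:] * Psi a m) \<le> Suc m"
    using Suc by (simp add: degree_pCons_eq_if)
  moreover have "degree (smult (cnj (a m)) (rev_star m (Psi a m))) \<le> Suc m"
    using degree_rev_star[of m] by (meson degree_smult_le le_SucI order_trans)
  ultimately show ?case by (simp add: degree_add_le)
qed

lemma rev_Phi_Suc: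
  "rev_star (Suc m) (Phi a (Suc m)) = rev_star m (Phi a m) - smult (a m) ([:0, 1:] * Phi a m)"
proof -
  have "rev_star (Suc m) (Phi a (Suc m)) =
     rev_star (Suc m) ([:0, 1:] * Phi a m) - smult (a m) (rev_star (Suc m) (rev_star m (Phi a m)))"
    by (simp only: Phi.simps rev_star_diff rev_star_smult complex_cnj_cnj)
  also have "\<dots> = rev_star m (Phi a m) - smult (a m) ([:0, 1:] * Phi a m)"
    by (simp only: rev_star_z rev_star_deg[OF degree_rev_star] rev_star_rev_star[OF degree_Phi])
  finally show ?thesis .
qed

lemma rev_Psi_Suc:
  "rev_star (Suc m) (Psi a (Suc m)) = rev_star m (Psi a m) + smult (a m) ([:0, 1:] * Psi a m)"
proof -
  have "rev_star (Suc m) (Psi a (Suc m)) =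
     rev_star (Suc m) ([:0, 1:] * Psi a m) + smult (a m) (rev_star (Suc m) (rev_star m (Psi a m)))"
    by (simp only: Psi.simps rev_star_add rev_star_smult complex_cnj_cnj)
  also have "\<dots> = rev_star m (Psi a m) + smult (a m) ([:0, 1:] * Psi a m)"
    by (simp only: rev_star_z rev_star_deg[OF degree_rev_star] rev_star_rev_star[OF degree_Psi])
  finally show ?thesis .
qed

lemma smult_as_mult: "smult c p = [:c:] * p" by simp

lemma det_identity:
  "Phi a m * rev_star m (Psi a m) + Psi a m * rev_star m (Phi a m)
     = smult (2 * (\<Prod>j<m. 1 - complex_of_real ((norm (a j))\<^sup>2))) (monom 1 m) \<and>
   rev_star m (Phi a m) * Psi a m + rev_star m (Psi a m) * Phi a m
     = smult (2 * (\<Prod>j<m. 1 - complex_of_real ((norm (a j))\<^sup>2))) (monom 1 m)"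
proof (induction m)
  case 0
  then show ?case by (simp add: rev_star_one numeral_poly)
next
  case (Suc m)
  define z :: "complex poly" where "z = [:0, 1:]"
  define P where "P = Phi a m"
  define Q where "Q = Psi a m"
  define Ps where "Ps = rev_star m (Phi a m)"
  define Qs where "Qs = rev_star m (Psi a m)"
  define C where "C = smult (2 * (\<Prod>j<m. 1 - complex_of_real ((norm (a j))\<^sup>2))) (monom 1 m)"
  define A where "A = [:a m:]"
  define B where "B = [:cnj (a m):]"
  define N where "N = [:complex_of_real ((norm (a m))\<^sup>2):]"
  have h: "cnj (a m) * a m = complex_of_real ((norm (a m))\<^sup>2)"
    by (metis complex_norm_square mult.commute)
  have AB: "B * A = N" unfolding A_def B_def N_def h[symmetric] by simp
  have I1: "P * Qs + Q * Ps = C" and I2: "Ps * Q + Qs * P = C"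
    using Suc unfolding P_def Q_def Ps_def Qs_def C_def by auto
  define nn where "nn = complex_of_real ((norm (a m))\<^sup>2)"
  define K where "K = 2 * (\<Prod>j<m. 1 - complex_of_real ((norm (a j))\<^sup>2))"
  have zC: "z * C = smult K (monom 1 (Suc m))"
    unfolding z_def C_def K_def by (simp add: monom_Suc)
  have zNC: "z * N * C = smult nn (z * C)"
    unfolding N_def nn_def by (simp add: mult.commute mult.left_commute)
  have CS: "smult (2 * (\<Prod>j<Suc m. 1 - complex_of_real ((norm (a j))\<^sup>2))) (monom 1 (Suc m))
      = z * C - z * N * C"
    unfolding zNC zC K_def nn_def
    by (simp add: smult_diff_left[symmetric] algebra_simps)
  have e1: "Phi a (Suc m) = z * P - B * Ps" unfolding z_def P_def Ps_def B_def by simp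
  have e2: "Psi a (Suc m) = z * Q + B * Qs" unfolding z_def Q_def Qs_def B_def by simp
  have e3: "rev_star (Suc m) (Phi a (Suc m)) = Ps - A * z * P"
    unfolding z_def P_def Ps_def A_def rev_Phi_Suc by simp
  have e4: "rev_star (Suc m) (Psi a (Suc m)) = Qs + A * z * Q"
    unfolding z_def Q_def Qs_def A_def rev_Psi_Suc by simp
  have g1: "(z * P - B * Ps) * (Qs + A * z * Q) + (z * Q + B * Qs) * (Ps - A * z * P)
      = z * (P * Qs + Q * Ps) - z * (B * A) * (Ps * Q + Qs * P)"
    by (simp add: algebra_simps)
  have g2: "(Ps - A * z * P) * (z * Q + B * Qs) + (Qs + A * z * Q) * (z * P - B * Ps)
      = z * (Ps * Q + Qs * P) - z * (B * A) * (P * Qs + Q * Ps)"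
    by (simp add: algebra_simps)
  show ?case unfolding e3 e4 unfolding e1 e2 CS g1 g2 I1 I2 AB by simp
qed

lemma main_ind:
  fixes a :: "nat \<Rightarrow> complex" and k n :: nat and c X Y U V :: "complex poly"
  assumes X: "X = rev_star k (Psi a k) + Psi a k" and Y: "Y = rev_star k (Phi a k) - Phi a k"
    and U: "U = rev_star k (Psi a k) - Psi a k" and V: "V = rev_star k (Phi a k) + Phi a k"
    and b1: "c = Phi a k * X + Psi a k * Y" and b2: "c = Phi a k * U + Psi a k * V"
    and b3: "c = rev_star k (Phi a k) * X - rev_star k (Psi a k) * Y"
    and b4: "- c = rev_star k (Phi a k) * U - rev_star k (Psi a k) * V"
  shows "c * Phi_assoc a k n = Phi a (n + k) * X + Psi a (n + k) * Y \<and>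
    c * Psi_assoc a k n = Phi a (n + k) * U + Psi a (n + k) * V \<and>
    c * rev_star n (Phi_assoc a k n) = rev_star (n + k) (Phi a (n + k)) * X - rev_star (n + k) (Psi a (n + k)) * Y \<and>
    c * (- rev_star n (Psi_assoc a k n)) = rev_star (n + k) (Phi a (n + k)) * U - rev_star (n + k) (Psi a (n + k)) * V"
proof (induction n)
  case 0
  show ?case using b1 b2 b3 b4 by (simp add: Phi_assoc_def Psi_assoc_def rev_star_one)
next
  case (Suc n)
  define z :: "complex poly" where "z = [:0, 1:]"
  define A where "A = [:a (n + k):]"
  define B where "B = [:cnj (a (n + k)):]"
  define P where "P = Phi a (n + k)"
  define Q where "Q = Psi a (n + k)"
  define Ps where "Ps = rev_star (n + k) (Phi a (n + k))"
  define Qs where "Qs = rev_star (n + k) (Psi a (n + k))"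
  define f where "f = Phi_assoc a k n"
  define g where "g = Psi_assoc a k n"
  define fs where "fs = rev_star n (Phi_assoc a k n)"
  define gs where "gs = rev_star n (Psi_assoc a k n)"
  have I1: "c * f = P * X + Q * Y" and I2: "c * g = P * U + Q * V"
    and I3: "c * fs = Ps * X - Qs * Y" and I4: "c * (- gs) = Ps * U - Qs * V"
    using Suc unfolding f_def g_def fs_def gs_def P_def Q_def Ps_def Qs_def by auto
  have sk: "Suc n + k = Suc (n + k)" by simp
  have e1: "Phi a (Suc n + k) = z * P - B * Ps" unfolding sk z_def P_def Ps_def B_def by simp
  have e2: "Psi a (Suc n + k) = z * Q + B * Qs" unfolding sk z_def Q_def Qs_def B_def by simp
  have e3: "rev_star (Suc n + k) (Phi a (Suc n + k)) = Ps - A * z * P"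
    unfolding sk z_def P_def Ps_def A_def rev_Phi_Suc by simp
  have e4: "rev_star (Suc n + k) (Psi a (Suc n + k)) = Qs + A * z * Q"
    unfolding sk z_def Q_def Qs_def A_def rev_Psi_Suc by simp
  have f1: "Phi_assoc a k (Suc n) = z * f - B * fs"
    unfolding z_def f_def fs_def B_def Phi_assoc_def by simp
  have f2: "Psi_assoc a k (Suc n) = z * g + B * gs"
    unfolding z_def g_def gs_def B_def Psi_assoc_def by simp
  have f3: "rev_star (Suc n) (Phi_assoc a k (Suc n)) = fs - A * z * f"
    unfolding z_def f_def fs_def A_def Phi_assoc_def rev_Phi_Suc by simp
  have f4: "rev_star (Suc n) (Psi_assoc a k (Suc n)) = gs + A * z * g"
    unfolding z_def g_def gs_def A_def Psi_assoc_def rev_Psi_Suc by simp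
  have g1: "c * (z * f - B * fs) = (z * P - B * Ps) * X + (z * Q + B * Qs) * Y"
  proof -
    have "c * (z * f - B * fs) = z * (c * f) - B * (c * fs)" by (simp add: algebra_simps)
    also have "\<dots> = (z * P - B * Ps) * X + (z * Q + B * Qs) * Y" unfolding I1 I3 by (simp add: algebra_simps)
    finally show ?thesis .
  qed
  have g2: "c * (z * g + B * gs) = (z * P - B * Ps) * U + (z * Q + B * Qs) * V"
  proof -
    have "c * (z * g + B * gs) = z * (c * g) - B * (c * (- gs))" by (simp add: algebra_simps)
    also have "\<dots> = (z * P - B * Ps) * U + (z * Q + B * Qs) * V" unfolding I2 I4 by (simp add: algebra_simps)
    finally show ?thesis .
  qed
  have g3: "c * (fs - A * z * f) = (Ps - A * z * P) * X - (Qs + A * z * Q) * Y"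
  proof -
    have "c * (fs - A * z * f) = c * fs - A * z * (c * f)" by (simp add: algebra_simps)
    also have "\<dots> = (Ps - A * z * P) * X - (Qs + A * z * Q) * Y" unfolding I1 I3 by (simp add: algebra_simps)
    finally show ?thesis .
  qed
  have g4: "c * (- (gs + A * z * g)) = (Ps - A * z * P) * U - (Qs + A * z * Q) * V"
  proof -
    have "c * (- (gs + A * z * g)) = c * (- gs) - A * z * (c * g)" by (simp add: algebra_simps)
    also have "\<dots> = (Ps - A * z * P) * U - (Qs + A * z * Q) * V" unfolding I2 I4 by (simp add: algebra_simps)
    finally show ?thesis .
  qed
  show ?case unfolding e3 e4 f3 f4 unfolding e1 e2 f1 f2 using g1 g2 g3 g4 by blast
qed

theorem theorem14:
  fixes a :: "nat \<Rightarrow> complex" and k n :: nat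
  assumes verblunsky: "\<And>j. norm (a j) < 1"
    and k_pos: "k \<ge> 1"
  defines "c \<equiv> smult (2 * (\<Prod>j<k. 1 - complex_of_real ((norm (a j))\<^sup>2))) (monom 1 k)"
  shows "(c * Phi_assoc a k n
           = Phi a (n + k) * (rev_star k (Psi a k) + Psi a k)
             + Psi a (n + k) * (rev_star k (Phi a k) - Phi a k)) \<and>
         (c * Psi_assoc a k n
           = Phi a (n + k) * (rev_star k (Psi a k) - Psi a k)
             + Psi a (n + k) * (rev_star k (Phi a k) + Phi a k)) \<and>
         (c * rev_star n (Phi_assoc a k n)
           = rev_star (n + k) (Phi a (n + k)) * (rev_star k (Psi a k) + Psi a k)
             - rev_star (n + k) (Psi a (n + k)) * (rev_star k (Phi a k) - Phi a k)) \<and>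
         (c * (- rev_star n (Psi_assoc a k n))
           = rev_star (n + k) (Phi a (n + k)) * (rev_star k (Psi a k) - Psi a k)
             - rev_star (n + k) (Psi a (n + k)) * (rev_star k (Phi a k) + Phi a k))"
proof -
  have D: "Phi a k * rev_star k (Psi a k) + Psi a k * rev_star k (Phi a k) = c"
    and D': "rev_star k (Phi a k) * Psi a k + rev_star k (Psi a k) * Phi a k = c"
    using det_identity[of a k] unfolding c_def by auto
  show ?thesis
  proof (rule main_ind[OF refl refl refl refl])
    show "c = Phi a k * (rev_star k (Psi a k) + Psi a k) + Psi a k * (rev_star k (Phi a k) - Phi a k)"
      using D by (simp add: algebra_simps)
    show "c = Phi a k * (rev_star k (Psi a k) - Psi a k) + Psi a k * (rev_star k (Phi a k) + Phi a k)"
      using D by (simp add: algebra_simps)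
    show "c = rev_star k (Phi a k) * (rev_star k (Psi a k) + Psi a k) - rev_star k (Psi a k) * (rev_star k (Phi a k) - Phi a k)"
      using D' by (simp add: algebra_simps)
    show "- c = rev_star k (Phi a k) * (rev_star k (Psi a k) - Psi a k) - rev_star k (Psi a k) * (rev_star k (Phi a k) + Phi a k)"
      using D' by (simp add: algebra_simps)
  qed
qed

end
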